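(* For $0\le i\le n$, $dp(i,i)$ is the largest pair in $DP_i$, and its second component equals $\pi_i$. For $1\le i\le n$, $dp(i,i)$ is the smallest pair (in lexicographic order) greater than $dp(i-1,i-1)$ among integer pairs whose second component equals $\pi_i$.
   Context: Let $x_0\le x_1\le\cdots\le x_{n+1}$ be real numbers, $\{x\}=x-\lfloor x\rfloor$, and let $\pi=(\pi_0,\dots,\pi_{n+1})$ be the permutation of $\{0,\dots,n+1\}$ such that for $0\le i<j\le n+1$, $\pi_i>\pi_j$ iff $(\{x_i\},-x_i,i)<(\{x_j\},-x_j,j)$ lexicographically. For a sequence of indices $s_0<\cdots<s_k$, a drop is a consecutive pair $(s_{h-1},s_h)$ with $\pi_{s_{h-1}}>\pi_{s_h}$. For $0\le h\le i\le n$, $dp(h,i)$ is the pair $(d(h,i),p(h,i))$, where $d(h,i)$ is the minimum number of drops over all sequences of $h+1$ indices $0=s_0<s_1<\cdots<s_h\le i$, and $p(h,i)$ is the minimum of $\pi_{s_h}$ over all such sequences having exactly $d(h,i)$ drops. Let $DP_i=\{dp(h,i)\mid 0\le h\le i\}$. Pairs are compared lexicographically. *)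

theory Defs
  imports Complex_Main
begin

definition key_less :: "(nat \<Rightarrow> real) \<Rightarrow> nat \<Rightarrow> nat \<Rightarrow> bool" where
  "key_less x i j \<longleftrightarrow>
     frac (x i) < frac (x j) \<or>
     (frac (x i) = frac (x j) \<and> - x i < - x j) \<or>
     (frac (x i) = frac (x j) \<and> - x i = - x j \<and> i < j)"

definition adm_seq :: "nat \<Rightarrow> nat \<Rightarrow> (nat \<Rightarrow> nat) \<Rightarrow> bool" where
  "adm_seq h i s \<longleftrightarrow> s 0 = 0 \<and> (\<forall>k. 1 \<le> k \<and> k \<le> h \<longrightarrow> s (k - 1) < s k) \<and> s h \<le> i"

definition drops :: "(nat \<Rightarrow> nat) \<Rightarrow> nat \<Rightarrow> (nat \<Rightarrow> nat) \<Rightarrow> nat" where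
  "drops \<pi> h s = card {k. 1 \<le> k \<and> k \<le> h \<and> \<pi> (s (k - 1)) > \<pi> (s k)}"

definition dd :: "(nat \<Rightarrow> nat) \<Rightarrow> nat \<Rightarrow> nat \<Rightarrow> nat" where
  "dd \<pi> h i = (LEAST d. \<exists>s. adm_seq h i s \<and> drops \<pi> h s = d)"

definition pp :: "(nat \<Rightarrow> nat) \<Rightarrow> nat \<Rightarrow> nat \<Rightarrow> nat" where
  "pp \<pi> h i = (LEAST p. \<exists>s. adm_seq h i s \<and> drops \<pi> h s = dd \<pi> h i \<and> \<pi> (s h) = p)"

definition dp :: "(nat \<Rightarrow> nat) \<Rightarrow> nat \<Rightarrow> nat \<Rightarrow> int \<times> int" where
  "dp \<pi> h i = (int (dd \<pi> h i), int (pp \<pi> h i))"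

definition lex_less :: "int \<times> int \<Rightarrow> int \<times> int \<Rightarrow> bool" where
  "lex_less a b \<longleftrightarrow> fst a < fst b \<or> (fst a = fst b \<and> snd a < snd b)"

definition lex_le :: "int \<times> int \<Rightarrow> int \<times> int \<Rightarrow> bool" where
  "lex_le a b \<longleftrightarrow> lex_less a b \<or> a = b"

end

theory Submission
  imports Defs
begin

lemma mono_gap:
  assumes "adm_seq h i s" shows "k + j \<le> h \<Longrightarrow> s k + j \<le> s (k + j)"
proof (induction j)
  case 0 then show ?case by simp
next
  case (Suc j)
  have "s (k + Suc j - 1) < s (k + Suc j)"
    using assms Suc.prems unfolding adm_seq_def by auto
  then show ?case using Suc by simp
qed

lemma adm_id: assumes "adm_seq i i s" "k \<le> i" shows "s k = k"
proof -
  have "s 0 + k \<le> s (0 + k)" using mono_gap[OF assms(1), of 0 k] assms(2) by simp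
  moreover obtain m where m: "i = k + m" using assms(2) le_Suc_ex by blast
  moreover have "s k + m \<le> s (k + m)" using mono_gap[OF assms(1), of k m] m by simp
  moreover have "s 0 = 0" "s i \<le> i" using assms(1) unfolding adm_seq_def by auto
  ultimately show ?thesis using assms(2) by simp
qed

lemma adm_idI: "adm_seq i i (\<lambda>k. k)" unfolding adm_seq_def by auto

lemma drops_id: assumes "adm_seq i i s" shows "drops \<pi> i s = drops \<pi> i (\<lambda>k. k)"
proof -
  have "{k. 1 \<le> k \<and> k \<le> i \<and> \<pi> (s (k - 1)) > \<pi> (s k)} = {k. 1 \<le> k \<and> k \<le> i \<and> \<pi> (k - 1) > \<pi> k}"
  proof (intro Collect_cong iffI)
    fix k assume k: "1 \<le> k \<and> k \<le> i \<and> \<pi> (s (k - 1)) > \<pi> (s k)"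
    then have a1: "k - 1 \<le> i" and a2: "k \<le> i" by auto
    have "s (k - 1) = k - 1" "s k = k" using adm_id[OF assms a1] adm_id[OF assms a2] by blast+
    then show "1 \<le> k \<and> k \<le> i \<and> \<pi> (k - 1) > \<pi> k" using k by simp
  next
    fix k assume k: "1 \<le> k \<and> k \<le> i \<and> \<pi> (k - 1) > \<pi> k"
    then have a1: "k - 1 \<le> i" and a2: "k \<le> i" by auto
    have "s (k - 1) = k - 1" "s k = k" using adm_id[OF assms a1] adm_id[OF assms a2] by blast+
    then show "1 \<le> k \<and> k \<le> i \<and> \<pi> (s (k - 1)) > \<pi> (s k)" using k by simp
  qed
  then show ?thesis unfolding drops_def by simp
qed

lemma dd_ii: "dd \<pi> i i = drops \<pi> i (\<lambda>k. k)"
  unfolding dd_def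
proof (rule Least_equality)
  show "\<exists>s. adm_seq i i s \<and> drops \<pi> i s = drops \<pi> i (\<lambda>k. k)" using adm_idI by blast
next
  fix y assume "\<exists>s. adm_seq i i s \<and> drops \<pi> i s = y"
  then obtain s where s: "adm_seq i i s" "drops \<pi> i s = y" by blast
  have "drops \<pi> i s = drops \<pi> i (\<lambda>k. k)" by (rule drops_id[OF s(1)])
  then show "drops \<pi> i (\<lambda>k. k) \<le> y" using s(2) by simp
qed

lemma pp_ii: "pp \<pi> i i = \<pi> i"
  unfolding pp_def
proof (rule Least_equality)
  show "\<exists>s. adm_seq i i s \<and> drops \<pi> i s = dd \<pi> i i \<and> \<pi> (s i) = \<pi> i"
  proof (intro exI conjI)
    show "adm_seq i i (\<lambda>k. k)" by (rule adm_idI)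
    show "drops \<pi> i (\<lambda>k. k) = dd \<pi> i i" by (rule dd_ii[symmetric])
  qed simp
next
  fix y assume "\<exists>s. adm_seq i i s \<and> drops \<pi> i s = dd \<pi> i i \<and> \<pi> (s i) = y"
  then obtain s where s: "adm_seq i i s" "\<pi> (s i) = y" by blast
  have "s i = i" by (rule adm_id[OF s(1)]) simp
  then show "\<pi> i \<le> y" using s(2) by simp
qed

lemma chain: fixes a b :: nat shows "a < b \<Longrightarrow> \<pi> a > \<pi> b \<Longrightarrow> \<exists>k. a < k \<and> k \<le> b \<and> \<pi> (k - 1) > (\<pi> k :: nat)"
proof (induction b)
  case 0 then show ?case by simp
next
  case (Suc b)
  show ?case
  proof (cases "a = b")
    case True then show ?thesis using Suc.prems by (intro exI[of _ "Suc b"]) auto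
  next
    case False
    then have ab: "a < b" using Suc.prems by simp
    show ?thesis
    proof (cases "\<pi> a > \<pi> b")
      case True then show ?thesis using Suc.IH ab by force
    next
      case False then show ?thesis using Suc.prems ab by (intro exI[of _ "Suc b"]) auto
    qed
  qed
qed

lemma witness:
  assumes "h \<le> i"
  shows "\<exists>s. adm_seq h i s \<and> (drops \<pi> h s < drops \<pi> i (\<lambda>k. k) \<or>
           (drops \<pi> h s = drops \<pi> i (\<lambda>k. k) \<and> \<pi> (s h) \<le> \<pi> i))"
proof (cases "h = 0")
  case True
  have a: "adm_seq h i (\<lambda>_. 0)" using True unfolding adm_seq_def by auto
  have d: "drops \<pi> h (\<lambda>_. 0) = 0" using True unfolding drops_def by auto
  show ?thesis
  proof (cases "drops \<pi> i (\<lambda>k. k) = 0")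
    case z: True
    have fin: "finite {k. 1 \<le> k \<and> k \<le> i \<and> \<pi> (k - 1) > \<pi> k}" by simp
    have "{k. 1 \<le> k \<and> k \<le> i \<and> \<pi> (k - 1) > \<pi> k} = {}"
      using z fin unfolding drops_def by (metis (no_types, lifting) card_0_eq)
    then have "\<not> \<pi> 0 > \<pi> i" using chain[of 0 i \<pi>] by (cases "i = 0") auto
    then show ?thesis using a d z by (intro exI[of _ "\<lambda>_. 0"]) auto
  next
    case False then show ?thesis using a d by (intro exI[of _ "\<lambda>_. 0"]) auto
  qed
next
  case False
  define s where "s = (\<lambda>k. if k = h then i else k)"
  have a: "adm_seq h i s" using False assms unfolding adm_seq_def s_def by auto
  define S where "S = {k. 1 \<le> k \<and> k \<le> h \<and> \<pi> (s (k - 1)) > \<pi> (s k)}"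
  define A where "A = {k. 1 \<le> k \<and> k < h \<and> \<pi> (k - 1) > \<pi> k}"
  define T where "T = {k. 1 \<le> k \<and> k \<le> i \<and> \<pi> (k - 1) > \<pi> k}"
  have finT: "finite T" unfolding T_def by simp
  have AT: "A \<subseteq> T" using assms unfolding A_def T_def by auto
  have hA: "h \<notin> A" unfolding A_def by auto
  have SA: "S \<subseteq> insert h A" unfolding S_def A_def s_def using False by auto
  have "card S \<le> card T"
  proof (cases "h \<in> S")
    case True
    moreover have "s (h - 1) = h - 1" "s h = i" unfolding s_def using False by auto
    ultimately have "\<pi> (h - 1) > \<pi> i" unfolding S_def by auto
    moreover have "h - 1 < i" using False assms by simp
    ultimately obtain c where c: "h - 1 < c" "c \<le> i" "\<pi> (c - 1) > \<pi> c"
      using chain[of "h - 1" i \<pi>] by blast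
    have cA: "c \<notin> A" using c unfolding A_def by auto
    have cT: "insert c A \<subseteq> T" using AT c False unfolding T_def by auto
    have fA: "finite A" using AT finT finite_subset by blast
    have "card S \<le> card (insert h A)" using SA fA by (intro card_mono) auto
    also have "\<dots> = card (insert c A)" using hA cA fA by simp
    also have "\<dots> \<le> card T" using cT finT by (rule card_mono[rotated])
    finally show ?thesis .
  next
    case False
    then have "S \<subseteq> T" using SA AT by auto
    then show ?thesis using finT card_mono by blast
  qed
  then have "drops \<pi> h s \<le> drops \<pi> i (\<lambda>k. k)" unfolding drops_def S_def T_def by simp
  moreover have "s h = i" unfolding s_def by simp
  ultimately show ?thesis using a by (intro exI[of _ s]) auto
qed

lemma part1:
  assumes "h \<le> i" shows "lex_le (dp \<pi> h i) (dp \<pi> i i)"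
proof -
  obtain s where s: "adm_seq h i s" and sd: "drops \<pi> h s < drops \<pi> i (\<lambda>k. k) \<or>
           (drops \<pi> h s = drops \<pi> i (\<lambda>k. k) \<and> \<pi> (s h) \<le> \<pi> i)"
    using witness[OF assms] by blast
  have dle: "dd \<pi> h i \<le> drops \<pi> h s" unfolding dd_def using s by (intro Least_le) auto
  show ?thesis
  proof (cases "dd \<pi> h i < drops \<pi> i (\<lambda>k. k)")
    case True then show ?thesis unfolding lex_le_def lex_less_def dp_def dd_ii by simp
  next
    case False
    then have eq: "dd \<pi> h i = drops \<pi> i (\<lambda>k. k)" "drops \<pi> h s = drops \<pi> i (\<lambda>k. k)"
      "\<pi> (s h) \<le> \<pi> i" using sd dle by auto
    have "pp \<pi> h i \<le> \<pi> (s h)" unfolding pp_def using s eq by (intro Least_le) auto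
    then show ?thesis using eq unfolding lex_le_def lex_less_def dp_def dd_ii pp_ii by auto
  qed
qed

lemma drops_Suc: "drops \<pi> (Suc j) (\<lambda>k. k) = drops \<pi> j (\<lambda>k. k) + (if \<pi> j > \<pi> (Suc j) then 1 else 0)"
proof -
  define B where "B = {k. 1 \<le> k \<and> k \<le> j \<and> \<pi> (k - 1) > \<pi> k}"
  have fB: "finite B" unfolding B_def by simp
  have nB: "Suc j \<notin> B" unfolding B_def by simp
  have e: "{k. 1 \<le> k \<and> k \<le> Suc j \<and> \<pi> (k - 1) > \<pi> k} =
    (if \<pi> j > \<pi> (Suc j) then insert (Suc j) B else B)"
  proof (intro set_eqI iffI)
    fix k assume "k \<in> {k. 1 \<le> k \<and> k \<le> Suc j \<and> \<pi> (k - 1) > \<pi> k}"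
    then show "k \<in> (if \<pi> j > \<pi> (Suc j) then insert (Suc j) B else B)"
      unfolding B_def by (cases "k = Suc j") auto
  next
    fix k assume "k \<in> (if \<pi> j > \<pi> (Suc j) then insert (Suc j) B else B)"
    then show "k \<in> {k. 1 \<le> k \<and> k \<le> Suc j \<and> \<pi> (k - 1) > \<pi> k}"
      unfolding B_def by (cases "\<pi> j > \<pi> (Suc j)") auto
  qed
  show ?thesis unfolding drops_def e B_def[symmetric] using fB nB by simp
qed

theorem lemma8:
  fixes x :: "nat \<Rightarrow> real" and \<pi> :: "nat \<Rightarrow> nat" and n :: nat
  assumes mono: "\<And>i. i \<le> n \<Longrightarrow> x i \<le> x (Suc i)"
    and perm: "bij_betw \<pi> {0..n+1} {0..n+1}"
    and pi_def: "\<And>i j. i < j \<Longrightarrow> j \<le> n + 1 \<Longrightarrow> (\<pi> i > \<pi> j \<longleftrightarrow> key_less x i j)"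
  shows "(\<forall>i \<le> n. (\<forall>h \<le> i. lex_le (dp \<pi> h i) (dp \<pi> i i)) \<and> snd (dp \<pi> i i) = int (\<pi> i))
       \<and> (\<forall>i. 1 \<le> i \<and> i \<le> n \<longrightarrow>
            lex_less (dp \<pi> (i - 1) (i - 1)) (dp \<pi> i i) \<and> snd (dp \<pi> i i) = int (\<pi> i) \<and>
            (\<forall>a::int. lex_less (dp \<pi> (i - 1) (i - 1)) (a, int (\<pi> i)) \<longrightarrow>
                      lex_le (dp \<pi> i i) (a, int (\<pi> i))))"
proof (intro conjI allI impI)
  fix i h assume "i \<le> n" "h \<le> i" then show "lex_le (dp \<pi> h i) (dp \<pi> i i)" using part1 by blast
next
  fix i show "snd (dp \<pi> i i) = int (\<pi> i)" unfolding dp_def pp_ii by simp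
next
  fix i show "snd (dp \<pi> i i) = int (\<pi> i)" unfolding dp_def pp_ii by simp
next
  fix i assume i: "1 \<le> i \<and> i \<le> n"
  then obtain j where j: "i = Suc j" by (cases i) auto
  have m: "j \<in> {0..n+1}" "Suc j \<in> {0..n+1}" using i j by auto
  have "\<pi> j \<noteq> \<pi> (Suc j)"
  proof
    assume "\<pi> j = \<pi> (Suc j)"
    then have "j = Suc j" using perm m unfolding bij_betw_def inj_on_def by blast
    then show False by simp
  qed
  then have ne: "\<pi> j < \<pi> (Suc j) \<or> \<pi> j > \<pi> (Suc j)" by arith
  define D where "D = drops \<pi> j (\<lambda>k. k)"
  have d1: "dp \<pi> (i - 1) (i - 1) = (int D, int (\<pi> j))"
    unfolding dp_def dd_ii pp_ii D_def j by simp
  have d1': "dp \<pi> j j = (int D, int (\<pi> j))"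
    unfolding dp_def dd_ii pp_ii D_def by simp
  have d2: "dp \<pi> (Suc j) (Suc j) = (int D + (if \<pi> j > \<pi> (Suc j) then 1 else 0), int (\<pi> (Suc j)))"
    unfolding dp_def dd_ii pp_ii D_def drops_Suc by simp
  show "lex_less (dp \<pi> (i - 1) (i - 1)) (dp \<pi> i i)"
    unfolding j lex_less_def using ne by (auto simp: d1' d2)
  fix a :: int assume "lex_less (dp \<pi> (i - 1) (i - 1)) (a, int (\<pi> i))"
  then have "a > int D \<or> (a = int D \<and> \<pi> j < \<pi> (Suc j))"
    unfolding j lex_less_def by (auto simp add: d1')
  then show "lex_le (dp \<pi> i i) (a, int (\<pi> i))"
    unfolding j lex_le_def lex_less_def using ne by (auto simp: d2)
qed

end
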